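(* Let $V$ be a reflexive Banach space, $X$ a Hilbert space, $C\subset V$, $K\colon C\to 2^C$ with nonempty closed convex values, $A\colon V\to V^*$, $f\in V^*$, $\varphi\colon V\to\mathbb{R}$ convex, $M\colon V\to X$ linear and bounded with adjoint $M^*$, and $j\colon X\to\mathbb{R}$ locally Lipschitz. Then $u\in C$ satisfies $u\in K(u)$ and $$\langle Au-f,z-u\rangle+\varphi(z)-\varphi(u)+j^0(Mu;Mz-Mu)\ge0\quad\forall z\in K(u)$$ if and only if $u\in C$, $u\in K(u)$, and there exists $w\in\partial j(Mu)$ such that $$\langle Au-f,z-u\rangle+\varphi(z)-\varphi(u)+\langle M^*w,z-u\rangle\ge0\quad\forall z\in K(u).$$
   Context: $j^0(x;v)=\limsup_{y\to x,\lambda\downarrow0}\frac{j(y+\lambda v)-j(y)}{\lambda}$ is the Clarke generalized directional derivative, and $\partial j(x)=\{\xi\in X:\langle\xi,v\rangle_X\le j^0(x;v)\ \forall v\in X\}$ is the Clarke subgradient. *)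

theory Defs
  imports "HOL-Analysis.Analysis"
begin

definition reflexive_space :: "'v::banach itself \<Rightarrow> bool" where
  "reflexive_space _ \<longleftrightarrow>
     (\<forall>\<Phi> :: ('v \<Rightarrow>\<^sub>L real) \<Rightarrow>\<^sub>L real. \<exists>x::'v. \<forall>l. blinfun_apply \<Phi> l = blinfun_apply l x)"

definition locally_lipschitz :: "('x::metric_space \<Rightarrow> real) \<Rightarrow> bool" where
  "locally_lipschitz j \<longleftrightarrow>
     (\<forall>x. \<exists>e>0. \<exists>L. \<forall>y\<in>ball x e. \<forall>z\<in>ball x e. \<bar>j y - j z\<bar> \<le> L * dist y z)"

definition clarke_dd :: "('x::real_normed_vector \<Rightarrow> real) \<Rightarrow> 'x \<Rightarrow> 'x \<Rightarrow> real" where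
  "clarke_dd j x v =
     real_of_ereal (Limsup (nhds x \<times>\<^sub>F at_right (0::real))
        (\<lambda>(y, t). ereal ((j (y + t *\<^sub>R v) - j y) / t)))"

text \<open>Clarke subgradient in a Hilbert space X (dual identified with X via the inner product).\<close>
definition clarke_subdiff :: "('x::real_inner \<Rightarrow> real) \<Rightarrow> 'x \<Rightarrow> 'x set" where
  "clarke_subdiff j x = {\<xi>. \<forall>v. inner \<xi> v \<le> clarke_dd j x v}"

definition adjoint_op :: "('v::real_normed_vector \<Rightarrow>\<^sub>L 'x::real_inner) \<Rightarrow> 'x \<Rightarrow> ('v \<Rightarrow>\<^sub>L real)" where
  "adjoint_op M w = Blinfun (\<lambda>v. inner w (blinfun_apply M v))"

end

theory Submission
  imports Defs
begin


lemma parallelogram_norm: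
  fixes u v :: "'a::real_inner"
  shows "norm (u - v)^2 + norm (u + v)^2 = 2 * norm u ^ 2 + 2 * norm v ^ 2"
  by (simp add: power2_norm_eq_inner inner_diff_left inner_diff_right inner_add_left inner_add_right inner_commute)

lemma exists_nearest:
  fixes S :: "'a::{real_inner,complete_space} set" and a :: 'a
  assumes "closed S" "convex S" "S \<noteq> {}"
  shows "\<exists>P\<in>S. \<forall>e\<in>S. dist a P \<le> dist a e"
proof -
  define d where "d = infdist a S"
  have d0: "d \<ge> 0" by (simp add: d_def infdist_nonneg)
  have dle: "\<And>e. e \<in> S \<Longrightarrow> d \<le> dist a e" by (simp add: d_def infdist_le)
  have "\<exists>y\<in>S. dist a y < d + 1 / (real n + 1)" for n
  proof -
    have "(INF y\<in>S. dist a y) < d + 1 / (real n + 1)"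
      using assms(3) by (simp add: d_def infdist_notempty[symmetric])
    then show ?thesis
      using assms(3) by (subst (asm) cINF_less_iff) (auto intro: bdd_belowI[of _ 0])
  qed
  then obtain x where xS: "\<And>n. x n \<in> S" and xd: "\<And>n. dist a (x n) < d + 1 / (real n + 1)"
    by metis
  define C where "C = 2 * d + 1"
  have sq: "norm (a - x n)^2 \<le> d^2 + C / (real n + 1)" for n
  proof -
    have h: "0 \<le> 1 / (real n + 1)" "1 / (real n + 1) \<le> 1" by (auto simp: field_simps)
    have "norm (a - x n) < d + 1 / (real n + 1)" using xd[of n] by (simp add: dist_norm)
    then have "norm (a - x n)^2 \<le> (d + 1 / (real n + 1))^2"
      by (intro power_mono) auto
    also have "\<dots> = d^2 + 2*d*(1 / (real n + 1)) + (1 / (real n + 1)) * (1 / (real n + 1))"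
      by (simp add: power2_eq_square algebra_simps)
    also have "\<dots> \<le> d^2 + 2*d*(1 / (real n + 1)) + (1 / (real n + 1))"
      using h by (intro add_left_mono) (metis mult_left_le mult.commute)
    also have "\<dots> = d^2 + C / (real n + 1)" by (simp add: C_def field_simps)
    finally show ?thesis .
  qed
  have cau: "norm (x n - x m)^2 \<le> 2 * C / (real n + 1) + 2 * C / (real m + 1)" for n m
  proof -
    have mid: "(1/2) *\<^sub>R x n + (1/2) *\<^sub>R x m \<in> S"
      using assms(2) xS by (intro convexD) auto
    have "d \<le> norm (a - ((1/2) *\<^sub>R x n + (1/2) *\<^sub>R x m))"
      using dle[OF mid] by (simp add: dist_norm)
    also have "a - ((1/2) *\<^sub>R x n + (1/2) *\<^sub>R x m) = (1/2) *\<^sub>R ((a - x n) + (a - x m))"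
      by (simp add: algebra_simps flip: scaleR_add_left)
    finally have "2 * d \<le> norm ((a - x n) + (a - x m))" by simp
    then have "(2*d)^2 \<le> norm ((a - x n) + (a - x m))^2"
      using d0 by (intro power_mono) auto
    moreover have "norm ((a - x n) - (a - x m))^2 + norm ((a - x n) + (a - x m))^2
        = 2 * norm (a - x n)^2 + 2 * norm (a - x m)^2" by (rule parallelogram_norm)
    moreover have "(a - x n) - (a - x m) = x m - x n" by simp
    moreover have "norm (x m - x n) = norm (x n - x m)" by (rule norm_minus_commute)
    ultimately show ?thesis using sq[of n] sq[of m] by (simp add: power2_eq_square) 
  qed
  have C0: "C > 0" using d0 by (simp add: C_def)
  have "Cauchy x"
  proof (rule metric_CauchyI)
    fix e :: real assume e: "e > 0"
    obtain N :: nat where N: "4 * C / (e^2) < real N" using reals_Archimedean2 by blast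
    have "dist (x m) (x n) < e" if "m \<ge> N" "n \<ge> N" for m n
    proof -
      have "2 * C / (real n + 1) \<le> 2 * C / (real N + 1)" "2 * C / (real m + 1) \<le> 2 * C / (real N + 1)"
        using that C0 by (auto intro!: divide_left_mono)
      then have "norm (x m - x n)^2 \<le> 4 * C / (real N + 1)" using cau[of m n] by simp
      also have "4 * C / (real N + 1) < e^2"
        using N C0 e by (simp add: field_simps) (smt (verit) mult_pos_pos zero_less_power)
      finally have "norm (x m - x n)^2 < e^2" .
      then show ?thesis using e by (simp add: dist_norm power_less_imp_less_base)
    qed
    then show "\<exists>M. \<forall>m\<ge>M. \<forall>n\<ge>M. dist (x m) (x n) < e" by blast
  qed
  then obtain P where P: "x \<longlonglongrightarrow> P" using Cauchy_convergent_iff convergent_def by blast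
  have PS: "P \<in> S" using closed_sequentially[OF assms(1) _ P] xS by blast
  have "dist a P \<le> d"
  proof (rule tendsto_le[OF trivial_limit_sequentially])
    show "(\<lambda>n. d + 1 / (real n + 1)) \<longlonglongrightarrow> d"
    proof -
      have "(\<lambda>n. 1 / (real n + 1)) \<longlonglongrightarrow> 0"
        using LIMSEQ_inverse_real_of_nat by (simp add: inverse_eq_divide add.commute)
      from tendsto_add[OF tendsto_const this, of d] show ?thesis by simp
    qed
    show "(\<lambda>n. dist a (x n)) \<longlonglongrightarrow> dist a P" by (intro tendsto_intros P)
    show "\<forall>\<^sub>F n in sequentially. dist a (x n) \<le> d + 1 / (real n + 1)"
      using xd by (intro always_eventually allI less_imp_le)
  qed
  then show ?thesis using PS dle by force
qed

lemma proj_variational: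
  fixes S :: "'a::real_inner set"
  assumes "convex S" "P \<in> S" "\<forall>e\<in>S. dist a P \<le> dist a e" "e \<in> S"
  shows "inner (a - P) (e - P) \<le> 0"
proof (rule ccontr)
  assume "\<not> ?thesis"
  then have pos: "inner (a - P) (e - P) > 0" by simp
  define q where "q = inner (a - P) (e - P)"
  define r where "r = norm (e - P)^2"
  have r0: "r > 0"
  proof -
    have "e \<noteq> P" using pos by auto
    then show ?thesis by (simp add: r_def)
  qed
  define s where "s = min 1 (q / r)"
  have s: "0 < s" "s \<le> 1" "s * r \<le> q" using pos r0 by (auto simp: s_def q_def min_def field_simps)
  have "P + s *\<^sub>R (e - P) \<in> S"
  proof -
    have "(1 - s) *\<^sub>R P + s *\<^sub>R e \<in> S" using assms s by (intro convexD) auto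
    also have "(1 - s) *\<^sub>R P + s *\<^sub>R e = P + s *\<^sub>R (e - P)" by (simp add: algebra_simps)
    finally show ?thesis .
  qed
  then have "dist a P \<le> dist a (P + s *\<^sub>R (e - P))" using assms by blast
  then have "norm (a - P)^2 \<le> norm ((a - P) - s *\<^sub>R (e - P))^2"
    by (simp add: dist_norm power_mono algebra_simps)
  also have "\<dots> = norm (a - P)^2 - 2 * s * q + s * s * r"
    by (simp add: power2_norm_eq_inner inner_diff_left inner_diff_right inner_commute q_def r_def algebra_simps)
  finally have "2 * s * q \<le> s * (s * r)" by (simp add: algebra_simps)
  moreover have "s * (s * r) \<le> s * q" using s by (intro mult_left_mono) auto
  ultimately have "2 * s * q \<le> s * q" by linarith
  moreover have "s * q > 0" using s pos q_def by simp
  ultimately show False by linarith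
qed



lemma ls_props:
  fixes g :: "'a \<Rightarrow> real"
  assumes F: "F \<noteq> bot" and B: "eventually (\<lambda>z. \<bar>g z\<bar> \<le> B) F"
  shows ls_fin: "Limsup F (\<lambda>z. ereal (g z)) = ereal (real_of_ereal (Limsup F (\<lambda>z. ereal (g z))))"
    and ls_abs: "\<bar>real_of_ereal (Limsup F (\<lambda>z. ereal (g z)))\<bar> \<le> B"
    and ls_le: "(\<And>y. y > c \<Longrightarrow> eventually (\<lambda>z. g z < y) F) \<Longrightarrow> real_of_ereal (Limsup F (\<lambda>z. ereal (g z))) \<le> c"
    and ls_ev: "real_of_ereal (Limsup F (\<lambda>z. ereal (g z))) < y \<Longrightarrow> eventually (\<lambda>z. g z < y) F"
proof -
  define Lm where "Lm = Limsup F (\<lambda>z. ereal (g z))"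
  have up: "Lm \<le> ereal B" unfolding Lm_def
    by (rule Limsup_bounded) (use B in \<open>auto elim!: eventually_mono\<close>)
  have lo: "ereal (- B) \<le> Lm" unfolding Lm_def
    by (rule le_Limsup[OF F]) (use B in \<open>auto elim!: eventually_mono\<close>)
  obtain r where r: "Lm = ereal r" using up lo by (cases Lm) auto
  show "Limsup F (\<lambda>z. ereal (g z)) = ereal (real_of_ereal (Limsup F (\<lambda>z. ereal (g z))))"
    using r Lm_def by simp
  show "\<bar>real_of_ereal (Limsup F (\<lambda>z. ereal (g z)))\<bar> \<le> B"
    using up lo r Lm_def by simp
  show "real_of_ereal (Limsup F (\<lambda>z. ereal (g z))) \<le> c" if h: "\<And>y. y > c \<Longrightarrow> eventually (\<lambda>z. g z < y) F"
  proof -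
    have "Lm \<le> ereal c" unfolding Lm_def Limsup_le_iff
    proof (intro allI impI)
      fix y :: ereal assume y: "y > ereal c"
      show "\<forall>\<^sub>F x in F. ereal (g x) < y"
      proof (cases y)
        case (real yr)
        then show ?thesis using h[of yr] y by (auto elim!: eventually_mono)
      qed (use y in auto)
    qed
    then show ?thesis using r Lm_def by simp
  qed
  show "eventually (\<lambda>z. g z < y) F" if h: "real_of_ereal (Limsup F (\<lambda>z. ereal (g z))) < y"
  proof -
    have "Lm < ereal y" using h r Lm_def by simp
    moreover have "Lm \<le> Lm" by simp
    ultimately have "eventually (\<lambda>z. ereal (g z) < ereal y) F"
      unfolding Lm_def Limsup_le_iff by blast
    then show ?thesis by simp
  qed
qed

definition cq :: "('x::real_normed_vector \<Rightarrow> real) \<Rightarrow> 'x \<Rightarrow> 'x \<times> real \<Rightarrow> real" where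
  "cq j v z = (j (fst z + snd z *\<^sub>R v) - j (fst z)) / snd z"

lemma cdd_eq: "clarke_dd j x v = real_of_ereal (Limsup (nhds x \<times>\<^sub>F at_right 0) (\<lambda>z. ereal (cq j v z)))"
  by (simp add: clarke_dd_def cq_def case_prod_unfold)

lemma F_nonbot: "nhds (x::'x::real_normed_vector) \<times>\<^sub>F at_right (0::real) \<noteq> bot"
  by (simp add: prod_filter_eq_bot)

lemma F_pos: "eventually (\<lambda>z. snd z > (0::real)) (nhds (x::'x::real_normed_vector) \<times>\<^sub>F at_right 0)"
proof -
  have "filterlim snd (at_right (0::real)) (nhds x \<times>\<^sub>F at_right 0)" by (rule filterlim_snd)
  moreover have "eventually (\<lambda>t. t > (0::real)) (at_right 0)" by (simp add: eventually_at_filter)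
  ultimately show ?thesis by (auto simp: filterlim_iff)
qed

lemma comp_shift:
  fixes x v :: "'x::real_normed_vector"
  assumes "eventually P (nhds x \<times>\<^sub>F at_right 0)"
  shows "eventually (\<lambda>z. P (fst z + snd z *\<^sub>R v, snd z)) (nhds x \<times>\<^sub>F at_right 0)"
proof -
  let ?F = "nhds x \<times>\<^sub>F at_right (0::real)"
  have s: "filterlim snd (at_right (0::real)) ?F" by (rule filterlim_snd)
  then have s0: "(snd \<longlongrightarrow> (0::real)) ?F"
    using filterlim_mono at_within_le_nhds by blast
  have f: "(fst \<longlongrightarrow> x) ?F" by (rule filterlim_fst)
  have "((\<lambda>z. fst z + snd z *\<^sub>R v) \<longlongrightarrow> x + 0 *\<^sub>R v) ?F"
    by (intro tendsto_intros f s0)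
  then have "((\<lambda>z. fst z + snd z *\<^sub>R v) \<longlongrightarrow> x) ?F" by simp
  from filterlim_Pair[OF this s] have "filterlim (\<lambda>z. (fst z + snd z *\<^sub>R v, snd z)) ?F ?F" .
  then show ?thesis using assms by (auto simp: filterlim_iff)
qed

lemma comp_scale:
  fixes x :: "'x::real_normed_vector"
  assumes "eventually P (nhds x \<times>\<^sub>F at_right 0)" "s > (0::real)"
  shows "eventually (\<lambda>z. P (fst z, s * snd z)) (nhds x \<times>\<^sub>F at_right 0)"
proof -
  let ?F = "nhds x \<times>\<^sub>F at_right (0::real)"
  have s: "filterlim snd (at_right (0::real)) ?F" by (rule filterlim_snd)
  then have s0: "(snd \<longlongrightarrow> (0::real)) ?F"
    using filterlim_mono at_within_le_nhds by blast
  have "((\<lambda>z. s * snd z) \<longlongrightarrow> s * 0) ?F" by (intro tendsto_intros s0)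
  moreover have "eventually (\<lambda>z. s * snd z > 0) ?F"
    using F_pos[of x] assms(2) by (auto elim!: eventually_mono)
  ultimately have "filterlim (\<lambda>z. s * snd z) (at_right 0) ?F"
    by (intro tendsto_imp_filterlim_at_right) auto
  have f: "filterlim fst (nhds x) ?F" by (rule filterlim_fst)
  from filterlim_Pair[OF f \<open>filterlim (\<lambda>z. s * snd z) (at_right 0) ?F\<close>]
  have "filterlim (\<lambda>z. (fst z, s * snd z)) ?F ?F" .
  then show ?thesis using assms(1) by (auto simp: filterlim_iff)
qed

lemma cq_bound:
  fixes j :: "'x::real_normed_vector \<Rightarrow> real"
  assumes "locally_lipschitz j"
  shows "\<exists>L\<ge>0. \<forall>v. eventually (\<lambda>z. \<bar>cq j v z\<bar> \<le> L * norm v) (nhds x \<times>\<^sub>F at_right 0)"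
proof -
  obtain e L0 where e: "e > 0" and L0: "\<forall>y\<in>ball x e. \<forall>z\<in>ball x e. \<bar>j y - j z\<bar> \<le> L0 * dist y z"
    using assms unfolding locally_lipschitz_def by blast
  have "eventually (\<lambda>z. \<bar>cq j v z\<bar> \<le> \<bar>L0\<bar> * norm v) (nhds x \<times>\<^sub>F at_right 0)" for v
  proof -
    define b where "b = e / (2 * (norm v + 1))"
    have b: "b > 0" using e unfolding b_def by (intro divide_pos_pos) (auto intro: add_nonneg_pos)
    have ev1: "eventually (\<lambda>y. dist y x < e / 2) (nhds x)"
      using e unfolding eventually_nhds_metric by (intro exI[of _ "e/2"]) auto
    have ev2: "eventually (\<lambda>t. t \<in> {0<..<b}) (at_right (0::real))"
      using b by (rule eventually_at_right_real)
    show ?thesis unfolding eventually_prod_filter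
    proof (intro exI conjI allI impI, rule ev1, rule ev2)
      fix y :: 'x and t :: real
      assume y: "dist y x < e / 2" and t: "t \<in> {0<..<b}"
      have tv: "t * norm v \<le> e / 2"
      proof -
        have "t * norm v \<le> b * (norm v + 1)" using t by (intro mult_mono) auto
        also have "\<dots> = e / 2"
        proof -
          have "norm v + 1 > 0" by (simp add: add_nonneg_pos)
          then show ?thesis by (simp add: b_def field_simps)
        qed
        finally show ?thesis .
      qed
      have yb: "y \<in> ball x e" using y e by (simp add: dist_commute)
      have yb2: "y + t *\<^sub>R v \<in> ball x e"
      proof -
        have "dist x (y + t *\<^sub>R v) \<le> dist x y + dist y (y + t *\<^sub>R v)" by (rule dist_triangle)
        also have "dist y (y + t *\<^sub>R v) = t * norm v" using t by (simp add: dist_norm)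
        finally show ?thesis using y tv by (simp add: dist_commute)
      qed
      have "\<bar>j (y + t *\<^sub>R v) - j y\<bar> \<le> L0 * dist (y + t *\<^sub>R v) y" using L0 yb yb2 by blast
      also have "\<dots> \<le> \<bar>L0\<bar> * dist (y + t *\<^sub>R v) y" by (intro mult_right_mono) auto
      also have "dist (y + t *\<^sub>R v) y = t * norm v" using t by (simp add: dist_norm)
      finally have h: "\<bar>j (y + t *\<^sub>R v) - j y\<bar> \<le> \<bar>L0\<bar> * (t * norm v)" .
      have "\<bar>cq j v (y, t)\<bar> = \<bar>j (y + t *\<^sub>R v) - j y\<bar> / t" using t by (simp add: cq_def abs_divide)
      also have "\<dots> \<le> \<bar>L0\<bar> * (t * norm v) / t" using h t by (intro divide_right_mono) auto
      also have "\<dots> = \<bar>L0\<bar> * norm v" using t by simp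
      finally show "\<bar>cq j v (y, t)\<bar> \<le> \<bar>L0\<bar> * norm v" .
    qed
  qed
  then show ?thesis by (intro exI[of _ "\<bar>L0\<bar>"]) auto
qed

locale clarke_ctx =
  fixes j :: "'x::real_normed_vector \<Rightarrow> real" and x :: 'x and L :: real
  assumes L: "L \<ge> 0" and bnd: "\<And>v. eventually (\<lambda>z. \<bar>cq j v z\<bar> \<le> L * norm v) (nhds x \<times>\<^sub>F at_right 0)"
begin

abbreviation "F \<equiv> nhds x \<times>\<^sub>F at_right (0::real)"

lemma p_abs: "\<bar>clarke_dd j x v\<bar> \<le> L * norm v"
  unfolding cdd_eq by (rule ls_abs[OF F_nonbot bnd])

lemma p_ev: "clarke_dd j x v < y \<Longrightarrow> eventually (\<lambda>z. cq j v z < y) F"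
  unfolding cdd_eq by (rule ls_ev[OF F_nonbot bnd])

lemma p_le: "(\<And>y. y > c \<Longrightarrow> eventually (\<lambda>z. cq j v z < y) F) \<Longrightarrow> clarke_dd j x v \<le> c"
  unfolding cdd_eq by (rule ls_le[OF F_nonbot bnd])

lemma p0: "clarke_dd j x 0 = 0"
  using p_abs[of 0] by simp

lemma p_sub: "clarke_dd j x (v + w) \<le> clarke_dd j x v + clarke_dd j x w"
proof (rule p_le)
  fix y assume y: "y > clarke_dd j x v + clarke_dd j x w"
  define e where "e = (y - clarke_dd j x v - clarke_dd j x w) / 2"
  have e: "e > 0" using y by (simp add: e_def)
  have 1: "eventually (\<lambda>z. cq j v z < clarke_dd j x v + e) F" by (rule p_ev) (use e in simp)
  have "eventually (\<lambda>z. cq j w z < clarke_dd j x w + e) F" by (rule p_ev) (use e in simp)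
  from comp_shift[OF this, of v]
  have 2: "eventually (\<lambda>z. cq j w (fst z + snd z *\<^sub>R v, snd z) < clarke_dd j x w + e) F" by simp
  show "eventually (\<lambda>z. cq j (v + w) z < y) F"
    using 1 2
  proof eventually_elim
    case (elim z)
    have "cq j (v + w) z = cq j v z + cq j w (fst z + snd z *\<^sub>R v, snd z)"
      by (simp add: cq_def scaleR_add_right add.assoc add_divide_distrib[symmetric])
    moreover have "clarke_dd j x v + e + (clarke_dd j x w + e) = y" by (simp add: e_def field_simps)
    ultimately show ?case using elim by linarith
  qed
qed

lemma p_hom_le: "s > 0 \<Longrightarrow> clarke_dd j x (s *\<^sub>R v) \<le> s * clarke_dd j x v"
proof (rule p_le)
  fix y assume s: "s > 0" and y: "y > s * clarke_dd j x v"
  have "clarke_dd j x v < y / s" using y s by (simp add: field_simps)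
  from comp_scale[OF p_ev[OF this] s]
  have "eventually (\<lambda>z. cq j v (fst z, s * snd z) < y / s) F" by simp
  then show "eventually (\<lambda>z. cq j (s *\<^sub>R v) z < y) F"
  proof eventually_elim
    case (elim z)
    have "cq j (s *\<^sub>R v) z = s * cq j v (fst z, s * snd z)"
      using s by (simp add: cq_def mult.commute)
    then show ?case using elim s by (simp add: field_simps)
  qed
qed

lemma p_hom: "s \<ge> 0 \<Longrightarrow> clarke_dd j x (s *\<^sub>R v) = s * clarke_dd j x v"
proof (cases "s = 0")
  case True then show ?thesis by (simp add: p0)
next
  case False
  assume "s \<ge> 0"
  then have s: "s > 0" using False by simp
  have "clarke_dd j x v = clarke_dd j x ((1/s) *\<^sub>R (s *\<^sub>R v))" using s by simp
  also have "\<dots> \<le> (1/s) * clarke_dd j x (s *\<^sub>R v)" using s by (intro p_hom_le) simp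
  finally have "s * clarke_dd j x v \<le> clarke_dd j x (s *\<^sub>R v)" using s by (simp add: field_simps)
  then show ?thesis using p_hom_le[OF s, of v] by simp
qed

end



lemma adjoint_apply: "blinfun_apply (adjoint_op M w) v = inner w (blinfun_apply M v)"
  unfolding adjoint_op_def
  by (subst bounded_linear_Blinfun_apply)
     (rule bounded_linear_compose[OF bounded_linear_inner_right blinfun.bounded_linear_right], simp)

context clarke_ctx begin
lemma p_comb: "a \<ge> 0 \<Longrightarrow> b \<ge> 0 \<Longrightarrow> clarke_dd j x (a *\<^sub>R y1 + b *\<^sub>R y2) \<le> a * clarke_dd j x y1 + b * clarke_dd j x y2"
  using p_sub[of "a *\<^sub>R y1" "b *\<^sub>R y2"] p_hom[of a y1] p_hom[of b y2] by simp
end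

lemma separation_main:
  fixes M :: "'v::real_normed_vector \<Rightarrow>\<^sub>L 'x::{real_inner, complete_space}"
    and j :: "'x \<Rightarrow> real" and \<psi> :: "'v \<Rightarrow> real" and Ku :: "'v set"
  assumes ctx: "clarke_ctx j (blinfun_apply M u) L"
    and Kc: "convex Ku" and uK: "u \<in> Ku"
    and psic: "\<And>c d z1 z2. c \<ge> 0 \<Longrightarrow> d \<ge> 0 \<Longrightarrow> c + d = 1 \<Longrightarrow> z1 \<in> Ku \<Longrightarrow> z2 \<in> Ku \<Longrightarrow>
                 \<psi> (c *\<^sub>R z1 + d *\<^sub>R z2) \<le> c * \<psi> z1 + d * \<psi> z2"
    and H: "\<forall>z\<in>Ku. \<psi> z + clarke_dd j (blinfun_apply M u) (blinfun_apply M z - blinfun_apply M u) \<ge> 0"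
  shows "\<exists>w\<in>clarke_subdiff j (blinfun_apply M u). \<forall>z\<in>Ku. \<psi> z + inner w (blinfun_apply M z - blinfun_apply M u) \<ge> 0"
proof -
  interpret clarke_ctx j "blinfun_apply M u" L by (rule ctx)
  define p where "p = clarke_dd j (blinfun_apply M u)"
  define m where "m z = blinfun_apply M z - blinfun_apply M u" for z
  have p0': "p 0 = 0" by (simp add: p_def p0)
  have pcomb: "\<And>a b y1 y2. a \<ge> 0 \<Longrightarrow> b \<ge> 0 \<Longrightarrow> p (a *\<^sub>R y1 + b *\<^sub>R y2) \<le> a * p y1 + b * p y2"
    unfolding p_def by (rule p_comb)
  have psub: "\<And>a b. p (a + b) \<le> p a + p b" unfolding p_def by (rule p_sub)
  have phom: "\<And>s a. s \<ge> 0 \<Longrightarrow> p (s *\<^sub>R a) = s * p a" unfolding p_def by (rule p_hom)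
  have pabs: "\<And>a. \<bar>p a\<bar> \<le> L * norm a" unfolding p_def by (rule p_abs)
  have H': "\<And>z. z \<in> Ku \<Longrightarrow> \<psi> z + p (m z) \<ge> 0" using H by (simp add: p_def m_def)
  define E :: "('x \<times> real) set" where
    "E = {e. \<exists>t\<ge>0. \<exists>z\<in>Ku. p (fst e + t *\<^sub>R m z) + t * \<psi> z \<le> snd e}"
  have inE: "(y, r) \<in> E" if "t \<ge> 0" "z \<in> Ku" "p (y + t *\<^sub>R m z) + t * \<psi> z \<le> r" for y r t z
    using that unfolding E_def by auto
  have E_convex: "convex E"
  proof (rule convexI)
    fix e1 e2 :: "'x \<times> real" and \<alpha> \<beta> :: real
    assume e1: "e1 \<in> E" and e2: "e2 \<in> E" and ab: "\<alpha> \<ge> 0" "\<beta> \<ge> 0" "\<alpha> + \<beta> = 1"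
    obtain t1 z1 where t1: "t1 \<ge> 0" "z1 \<in> Ku" "p (fst e1 + t1 *\<^sub>R m z1) + t1 * \<psi> z1 \<le> snd e1"
      using e1 unfolding E_def by auto
    obtain t2 z2 where t2: "t2 \<ge> 0" "z2 \<in> Ku" "p (fst e2 + t2 *\<^sub>R m z2) + t2 * \<psi> z2 \<le> snd e2"
      using e2 unfolding E_def by auto
    define t where "t = \<alpha> * t1 + \<beta> * t2"
    define y where "y = \<alpha> *\<^sub>R fst e1 + \<beta> *\<^sub>R fst e2"
    have fsteq: "fst (\<alpha> *\<^sub>R e1 + \<beta> *\<^sub>R e2) = y" "snd (\<alpha> *\<^sub>R e1 + \<beta> *\<^sub>R e2) = \<alpha> * snd e1 + \<beta> * snd e2"
      by (simp_all add: y_def)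
    have pc: "p (\<alpha> *\<^sub>R (fst e1 + t1 *\<^sub>R m z1) + \<beta> *\<^sub>R (fst e2 + t2 *\<^sub>R m z2))
        \<le> \<alpha> * p (fst e1 + t1 *\<^sub>R m z1) + \<beta> * p (fst e2 + t2 *\<^sub>R m z2)"
      using ab by (intro pcomb) auto
    have bnd: "\<alpha> * p (fst e1 + t1 *\<^sub>R m z1) + \<beta> * p (fst e2 + t2 *\<^sub>R m z2)
        \<le> \<alpha> * (snd e1 - t1 * \<psi> z1) + \<beta> * (snd e2 - t2 * \<psi> z2)"
      using ab t1 t2 by (intro add_mono mult_left_mono) auto
    show "\<alpha> *\<^sub>R e1 + \<beta> *\<^sub>R e2 \<in> E"
    proof (cases "t = 0")
      case True
      then have z: "\<alpha> * t1 = 0" "\<beta> * t2 = 0" using ab t1 t2 unfolding t_def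
        by (smt (verit) mult_nonneg_nonneg)+
      have "\<alpha> *\<^sub>R (fst e1 + t1 *\<^sub>R m z1) + \<beta> *\<^sub>R (fst e2 + t2 *\<^sub>R m z2)
          = \<alpha> *\<^sub>R fst e1 + \<beta> *\<^sub>R fst e2 + ((\<alpha> * t1) *\<^sub>R m z1 + (\<beta> * t2) *\<^sub>R m z2)"
        by (simp add: scaleR_add_right algebra_simps)
      also have "\<dots> = y" unfolding z by (simp add: y_def)
      finally have yeq: "\<alpha> *\<^sub>R (fst e1 + t1 *\<^sub>R m z1) + \<beta> *\<^sub>R (fst e2 + t2 *\<^sub>R m z2) = y" .
      have "p y \<le> \<alpha> * (snd e1 - t1 * \<psi> z1) + \<beta> * (snd e2 - t2 * \<psi> z2)"
        using pc bnd unfolding yeq by linarith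
      also have "\<dots> = \<alpha> * snd e1 + \<beta> * snd e2 - (\<alpha> * t1) * \<psi> z1 - (\<beta> * t2) * \<psi> z2"
        by (simp add: algebra_simps)
      also have "\<dots> = \<alpha> * snd e1 + \<beta> * snd e2" unfolding z by simp
      finally have py: "p y \<le> \<alpha> * snd e1 + \<beta> * snd e2" .
      then show ?thesis
        by (subst prod.collapse[symmetric], intro inE[of 0 u]) (use py in \<open>auto simp: uK y_def\<close>)
    next
      case False
      then have tpos: "t > 0" using ab t1 t2 unfolding t_def
        by (smt (verit) mult_nonneg_nonneg)
      define c where "c = \<alpha> * t1 / t"
      define d where "d = \<beta> * t2 / t"
      have cd: "c \<ge> 0" "d \<ge> 0" "c + d = 1"
        using tpos ab t1 t2 by (auto simp: c_def d_def t_def add_divide_distrib[symmetric])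
      define z where "z = c *\<^sub>R z1 + d *\<^sub>R z2"
      have zK: "z \<in> Ku" unfolding z_def using Kc cd t1 t2 by (intro convexD) auto
      have tc: "t * c = \<alpha> * t1" "t * d = \<beta> * t2" using tpos by (simp_all add: c_def d_def)
      have mz: "t *\<^sub>R m z = (\<alpha> * t1) *\<^sub>R m z1 + (\<beta> * t2) *\<^sub>R m z2"
      proof -
        have "m z = c *\<^sub>R m z1 + d *\<^sub>R m z2"
        proof -
          have "m z = c *\<^sub>R blinfun_apply M z1 + d *\<^sub>R blinfun_apply M z2 - (c + d) *\<^sub>R blinfun_apply M u"
            using cd by (simp add: m_def z_def blinfun.add_right blinfun.scaleR_right)
          then show ?thesis by (simp add: m_def algebra_simps)
        qed
        then have "t *\<^sub>R m z = (t * c) *\<^sub>R m z1 + (t * d) *\<^sub>R m z2" by (simp add: scaleR_add_right)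
        then show ?thesis using tc by simp
      qed
      have ps: "t * \<psi> z \<le> \<alpha> * t1 * \<psi> z1 + \<beta> * t2 * \<psi> z2"
      proof -
        have "t * \<psi> z \<le> t * (c * \<psi> z1 + d * \<psi> z2)"
          using psic[OF cd t1(2) t2(2)] tpos unfolding z_def by (intro mult_left_mono) auto
        also have "\<dots> = (t * c) * \<psi> z1 + (t * d) * \<psi> z2" by (simp add: algebra_simps)
        finally show ?thesis using tc by simp
      qed
      have "y + t *\<^sub>R m z = \<alpha> *\<^sub>R (fst e1 + t1 *\<^sub>R m z1) + \<beta> *\<^sub>R (fst e2 + t2 *\<^sub>R m z2)"
        by (simp add: mz y_def scaleR_add_right algebra_simps)
      then have "p (y + t *\<^sub>R m z) + t * \<psi> z \<le> \<alpha> * snd e1 + \<beta> * snd e2"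
        using pc bnd ps by (simp add: algebra_simps)
      then show ?thesis
        by (subst prod.collapse[symmetric], intro inE[of t z]) (use \<open>p (y + t *\<^sub>R m z) + t * \<psi> z \<le> _\<close> in \<open>auto simp: zK tpos less_imp_le y_def\<close>)
    qed
  qed
  have E_cone: "s *\<^sub>R e \<in> E" if eE: "e \<in> E" and sp: "s > 0" for e s
  proof -
    obtain t z where tz: "t \<ge> 0" "z \<in> Ku" "p (fst e + t *\<^sub>R m z) + t * \<psi> z \<le> snd e"
      using eE unfolding E_def by auto
    have "p (s *\<^sub>R fst e + (s * t) *\<^sub>R m z) = s * p (fst e + t *\<^sub>R m z)"
      using phom[of s "fst e + t *\<^sub>R m z"] sp by (simp add: scaleR_add_right)
    then have "p (s *\<^sub>R fst e + (s * t) *\<^sub>R m z) + (s * t) * \<psi> z \<le> s * snd e"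
      using tz(3) sp by (smt (verit, ccfv_SIG) mult_left_mono distrib_left mult.assoc)
    then show ?thesis
      by (subst prod.collapse[symmetric], intro inE[of "s * t" z]) (use tz sp in auto)
  qed
  have E_low: "E \<subseteq> {e. snd e \<ge> - (L * norm (fst e))}"
  proof
    fix e assume "e \<in> E"
    then obtain t z where tz: "t \<ge> 0" "z \<in> Ku" "p (fst e + t *\<^sub>R m z) + t * \<psi> z \<le> snd e"
      unfolding E_def by auto
    have "p (t *\<^sub>R m z) \<le> p (fst e + t *\<^sub>R m z) + p (- fst e)"
      using psub[of "fst e + t *\<^sub>R m z" "- fst e"] by simp
    moreover have "p (t *\<^sub>R m z) = t * p (m z)" using phom tz by simp
    moreover have "t * (\<psi> z + p (m z)) \<ge> 0" using H' tz by simp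
    moreover have "p (- fst e) \<le> L * norm (fst e)" using pabs[of "- fst e"] by simp
    ultimately show "e \<in> {e. snd e \<ge> - (L * norm (fst e))}" using tz(3)
      by (simp add: algebra_simps)
  qed
  define S where "S = closure E"
  have closed_low: "closed {e :: 'x \<times> real. snd e \<ge> - (L * norm (fst e))}"
    by (intro closed_Collect_le continuous_intros)
  have S_low: "S \<subseteq> {e. snd e \<ge> - (L * norm (fst e))}"
    unfolding S_def using E_low closed_low by (rule closure_minimal)
  have E0: "(0, 0) \<in> E" using inE[of 0 u 0 0] uK p0' by simp
  define a :: "'x \<times> real" where "a = (0, -1)"
  have aS: "a \<notin> S" using S_low by (auto simp: a_def)
  obtain P where PS: "P \<in> S" and Pmin: "\<forall>e\<in>S. dist a P \<le> dist a e"
    using exists_nearest[of S a] E0 E_convex unfolding S_def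
    by (metis closure_subset closed_closure convex_closure empty_iff subsetD)
  have var: "\<And>e. e \<in> S \<Longrightarrow> inner (a - P) (e - P) \<le> 0"
    using proj_variational[of S P a] PS Pmin E_convex unfolding S_def by (auto simp: convex_closure)
  define n where "n = a - P"
  have n_le: "inner n e \<le> 0" if eE: "e \<in> E" for e
  proof (rule ccontr)
    assume "\<not> ?thesis"
    then have pos: "inner n e > 0" by simp
    define s where "s = (\<bar>inner n P\<bar> + 1) / inner n e"
    have s: "s > 0" using pos by (simp add: s_def)
    have "s *\<^sub>R e \<in> S" using E_cone[OF eE s] unfolding S_def using closure_subset by blast
    then have "inner n (s *\<^sub>R e - P) \<le> 0" using var n_def by simp
    then have "s * inner n e \<le> inner n P" by (simp add: inner_diff_right)
    moreover have "s * inner n e = \<bar>inner n P\<bar> + 1" using pos by (simp add: s_def)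
    ultimately show False by simp
  qed
  have nnz: "n \<noteq> 0" using aS PS by (auto simp: n_def)
  have n2: "snd n \<le> 0"
  proof -
    have "(0, 1) \<in> E" using inE[of 0 u 0 1] uK p0' by simp
    from n_le[OF this] show ?thesis by (simp add: inner_prod_def)
  qed
  have epi: "inner (fst n) y + snd n * p y \<le> 0" for y
  proof -
    have "(y, p y) \<in> E" using inE[of 0 u y "p y"] uK by simp
    from n_le[OF this] show ?thesis by (simp add: inner_prod_def)
  qed
  have n2neg: "snd n < 0"
  proof (rule ccontr)
    assume "\<not> ?thesis"
    then have "snd n = 0" using n2 by simp
    then have "inner (fst n) (fst n) \<le> 0" using epi[of "fst n"] by simp
    then have "fst n = 0" by (metis inner_gt_zero_iff not_less)
    then have "n = 0" using \<open>snd n = 0\<close> by (simp add: prod_eq_iff)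
    then show False using nnz by simp
  qed
  define w where "w = (- 1 / snd n) *\<^sub>R fst n"
  have wsub: "w \<in> clarke_subdiff j (blinfun_apply M u)"
    unfolding clarke_subdiff_def
  proof (intro CollectI allI)
    fix v
    have "inner (fst n) v \<le> - snd n * p v" using epi[of v] by simp
    then have "(- 1 / snd n) * inner (fst n) v \<le> (- 1 / snd n) * (- snd n * p v)"
      using n2neg by (intro mult_left_mono) (auto simp: field_simps)
    then show "inner w v \<le> clarke_dd j (blinfun_apply M u) v"
      using n2neg by (simp add: w_def p_def)
  qed
  have "\<forall>z\<in>Ku. \<psi> z + inner w (blinfun_apply M z - blinfun_apply M u) \<ge> 0"
  proof
    fix z assume zK: "z \<in> Ku"
    have "(- m z, \<psi> z) \<in> E" using inE[of 1 z "- m z" "\<psi> z"] zK p0' by simp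
    from n_le[OF this] have "- inner (fst n) (m z) + snd n * \<psi> z \<le> 0"
      by (simp add: inner_prod_def)
    then have "(- 1 / snd n) * (- inner (fst n) (m z) + snd n * \<psi> z) \<le> 0"
      using n2neg by (intro mult_nonneg_nonpos) (auto simp: field_simps)
    moreover have "(- 1 / snd n) * (- inner (fst n) (m z) + snd n * \<psi> z) = - inner w (m z) - \<psi> z"
      using n2neg by (simp add: w_def field_simps)
    ultimately have "inner w (m z) + \<psi> z \<ge> 0" by linarith
    then show "\<psi> z + inner w (blinfun_apply M z - blinfun_apply M u) \<ge> 0"
      by (simp add: m_def)
  qed
  with wsub show ?thesis by blast
qed


theorem mainTheorem4:
  fixes C :: "'v::banach set"
    and K :: "'v \<Rightarrow> 'v set"
    and A :: "'v \<Rightarrow> ('v \<Rightarrow>\<^sub>L real)"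
    and f :: "'v \<Rightarrow>\<^sub>L real"
    and \<phi> :: "'v \<Rightarrow> real"
    and M :: "'v \<Rightarrow>\<^sub>L 'x::{real_inner, complete_space}"
    and j :: "'x \<Rightarrow> real"
    and u :: 'v
  assumes "reflexive_space TYPE('v)"
    and "\<forall>x\<in>C. K x \<subseteq> C \<and> K x \<noteq> {} \<and> closed (K x) \<and> convex (K x)"
    and "convex_on UNIV \<phi>"
    and "locally_lipschitz j"
  shows "(u \<in> C \<and> u \<in> K u \<and>
           (\<forall>z\<in>K u. blinfun_apply (A u - f) (z - u) + \<phi> z - \<phi> u
                      + clarke_dd j (blinfun_apply M u) (blinfun_apply M z - blinfun_apply M u) \<ge> 0))
     \<longleftrightarrow>
         (u \<in> C \<and> u \<in> K u \<and>
           (\<exists>w\<in>clarke_subdiff j (blinfun_apply M u).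
              \<forall>z\<in>K u. blinfun_apply (A u - f) (z - u) + \<phi> z - \<phi> u
                      + blinfun_apply (adjoint_op M w) (z - u) \<ge> 0))"
proof -
  let ?x = "blinfun_apply M u"
  obtain L where L: "L \<ge> 0" "\<And>v. eventually (\<lambda>z. \<bar>cq j v z\<bar> \<le> L * norm v) (nhds ?x \<times>\<^sub>F at_right 0)"
    using cq_bound[OF assms(4), of ?x] by blast
  have ctx: "clarke_ctx j ?x L" by (rule clarke_ctx.intro) (use L in auto)
  define \<psi> where "\<psi> z = blinfun_apply (A u - f) (z - u) + \<phi> z - \<phi> u" for z
  have psic: "\<psi> (c *\<^sub>R z1 + d *\<^sub>R z2) \<le> c * \<psi> z1 + d * \<psi> z2"
    if cd: "c \<ge> 0" "d \<ge> 0" "c + d = 1" for c d z1 z2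
  proof -
    have "c *\<^sub>R z1 + d *\<^sub>R z2 - u = c *\<^sub>R (z1 - u) + d *\<^sub>R (z2 - u)"
    proof -
      have "u = c *\<^sub>R u + d *\<^sub>R u" using cd by (simp flip: scaleR_add_left)
      then show ?thesis by (simp add: algebra_simps)
    qed
    then have lin: "blinfun_apply (A u - f) (c *\<^sub>R z1 + d *\<^sub>R z2 - u)
        = c * blinfun_apply (A u - f) (z1 - u) + d * blinfun_apply (A u - f) (z2 - u)"
      by (simp add: blinfun.add_right blinfun.scaleR_right)
    have c1: "c = 1 - d" using cd by simp
    have "\<phi> ((1 - d) *\<^sub>R z1 + d *\<^sub>R z2) \<le> (1 - d) * \<phi> z1 + d * \<phi> z2"
      using cd by (intro convex_onD[OF assms(3)]) auto
    then have ph: "\<phi> (c *\<^sub>R z1 + d *\<^sub>R z2) \<le> c * \<phi> z1 + d * \<phi> z2" using c1 by simp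
    have "\<phi> u = c * \<phi> u + d * \<phi> u" using cd by (simp flip: distrib_right)
    then show ?thesis using lin ph unfolding \<psi>_def by (simp add: algebra_simps)
  qed
  show ?thesis
  proof
    assume lhs: "u \<in> C \<and> u \<in> K u \<and>
           (\<forall>z\<in>K u. blinfun_apply (A u - f) (z - u) + \<phi> z - \<phi> u
                      + clarke_dd j (blinfun_apply M u) (blinfun_apply M z - blinfun_apply M u) \<ge> 0)"
    then have uC: "u \<in> C" and uK: "u \<in> K u" by auto
    have Kc: "convex (K u)" using assms(2) uC by blast
    have H: "\<forall>z\<in>K u. \<psi> z + clarke_dd j ?x (blinfun_apply M z - blinfun_apply M u) \<ge> 0"
      using lhs by (simp add: \<psi>_def)
    obtain w where w: "w \<in> clarke_subdiff j ?x"
      and wz: "\<forall>z\<in>K u. \<psi> z + inner w (blinfun_apply M z - blinfun_apply M u) \<ge> 0"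
      using separation_main[OF ctx Kc uK psic H] by blast
    have "\<forall>z\<in>K u. blinfun_apply (A u - f) (z - u) + \<phi> z - \<phi> u
                      + blinfun_apply (adjoint_op M w) (z - u) \<ge> 0"
      using wz by (simp add: \<psi>_def adjoint_apply blinfun.diff_right inner_diff_right)
    then show "u \<in> C \<and> u \<in> K u \<and>
           (\<exists>w\<in>clarke_subdiff j (blinfun_apply M u).
              \<forall>z\<in>K u. blinfun_apply (A u - f) (z - u) + \<phi> z - \<phi> u
                      + blinfun_apply (adjoint_op M w) (z - u) \<ge> 0)"
      using uC uK w by blast
  next
    assume rhs: "u \<in> C \<and> u \<in> K u \<and>
           (\<exists>w\<in>clarke_subdiff j (blinfun_apply M u).
              \<forall>z\<in>K u. blinfun_apply (A u - f) (z - u) + \<phi> z - \<phi> u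
                      + blinfun_apply (adjoint_op M w) (z - u) \<ge> 0)"
    then obtain w where w: "w \<in> clarke_subdiff j ?x"
      and wz: "\<forall>z\<in>K u. blinfun_apply (A u - f) (z - u) + \<phi> z - \<phi> u
                      + blinfun_apply (adjoint_op M w) (z - u) \<ge> 0" by blast
    have "\<forall>z\<in>K u. blinfun_apply (A u - f) (z - u) + \<phi> z - \<phi> u
                      + clarke_dd j (blinfun_apply M u) (blinfun_apply M z - blinfun_apply M u) \<ge> 0"
    proof
      fix z assume zK: "z \<in> K u"
      have "inner w (blinfun_apply M z - blinfun_apply M u) \<le> clarke_dd j ?x (blinfun_apply M z - blinfun_apply M u)"
        using w unfolding clarke_subdiff_def by blast
      moreover have "blinfun_apply (adjoint_op M w) (z - u) = inner w (blinfun_apply M z - blinfun_apply M u)"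
        by (simp add: adjoint_apply blinfun.diff_right inner_diff_right)
      ultimately show "blinfun_apply (A u - f) (z - u) + \<phi> z - \<phi> u
                      + clarke_dd j (blinfun_apply M u) (blinfun_apply M z - blinfun_apply M u) \<ge> 0"
        using wz zK by fastforce
    qed
    then show "u \<in> C \<and> u \<in> K u \<and>
           (\<forall>z\<in>K u. blinfun_apply (A u - f) (z - u) + \<phi> z - \<phi> u
                      + clarke_dd j (blinfun_apply M u) (blinfun_apply M z - blinfun_apply M u) \<ge> 0)"
      using rhs by blast
  qed
qed

end
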